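(* In the standing setting below, every alternative $c$-convex function $\phi:\mathbb{X}\to\mathbb{R}$ is Lipschitz with Lipschitz constant $\|c\|_{\mathrm{Lip}}$.
   Context: Standing setting: $\mathbb{X},\mathbb{Y}\subset\mathbb{R}^n$ are compact with non-empty interior; $c:\mathbb{X}\times\mathbb{Y}\to\mathbb{R}$ has continuous $D_xc$, $D_yc$, and continuous mixed second derivatives with $D^2_{xy}c=(D^2_{yx}c)^T$; for each $x$ the map $y\mapsto -D_xc(x,y)$ is injective on $\mathbb{Y}$ and for each $y$ the map $x\mapsto -D_yc(x,y)$ is injective on $\mathbb{X}$; $D^2_{xy}c(x,y)$ is invertible everywhere; for every $y$ the set $\{-D_yc(x,y):x\in\mathbb{X}\}$ is convex and for every $x$ the set $\{-D_xc(x,y):y\in\mathbb{Y}\}$ is convex. $\|c\|_{\mathrm{Lip}}=\sup_{(x_1,y_1)\ne(x_0,y_0)}\frac{|c(x_1,y_1)-c(x_0,y_0)|}{(\|x_1-x_0\|^2+\|y_1-y_0\|^2)^{1/2}}$. $c$-chord: for $X_i=(x_i,u_i)\in\mathbb{X}\times\mathbb{R}$, $F_{X_0X_1}(x)=\sup\{-c(x,y)+h: y\in\mathbb{Y},h\in\mathbb{R},-c(x_i,y)+h\le u_i, i=0,1\}$. $\phi:\mathbb{X}\to\mathbb{R}$ is alternative $c$-convex if for all $x_0,x_1\in\mathbb{X}$, with $X_i=(x_i,\phi(x_i))$, $\phi(x)\le F_{X_0X_1}(x)$ for all $x\in\mathbb{X}$. *)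

theory Defs
  imports "HOL-Analysis.Analysis" "HOL-Library.Extended_Real"
begin

definition c_chord ::
  "('a \<Rightarrow> 'b \<Rightarrow> real) \<Rightarrow> 'b set \<Rightarrow> 'a \<times> real \<Rightarrow> 'a \<times> real \<Rightarrow> 'a \<Rightarrow> real" where
  "c_chord c Y X0 X1 x =
     Sup {- c x y + h | y h. y \<in> Y \<and> - c (fst X0) y + h \<le> snd X0 \<and> - c (fst X1) y + h \<le> snd X1}"

definition alt_c_convex ::
  "('a \<Rightarrow> 'b \<Rightarrow> real) \<Rightarrow> 'a set \<Rightarrow> 'b set \<Rightarrow> ('a \<Rightarrow> real) \<Rightarrow> bool" where
  "alt_c_convex c X Y \<phi> \<longleftrightarrow>
     (\<forall>x0\<in>X. \<forall>x1\<in>X. \<forall>x\<in>X. \<phi> x \<le> c_chord c Y (x0, \<phi> x0) (x1, \<phi> x1) x)"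

definition c_lip ::
  "('a::real_normed_vector \<Rightarrow> 'b::real_normed_vector \<Rightarrow> real) \<Rightarrow> 'a set \<Rightarrow> 'b set \<Rightarrow> ereal" where
  "c_lip c X Y =
     (SUP p \<in> {((x1, y1), (x0, y0)) | x1 y1 x0 y0.
                 x1 \<in> X \<and> y1 \<in> Y \<and> x0 \<in> X \<and> y0 \<in> Y \<and> (x1, y1) \<noteq> (x0, y0)}.
        ereal (\<bar>c (fst (fst p)) (snd (fst p)) - c (fst (snd p)) (snd (snd p))\<bar> /
               sqrt ((norm (fst (fst p) - fst (snd p)))\<^sup>2 + (norm (snd (fst p) - snd (snd p)))\<^sup>2)))"

end

theory Submission
  imports Defs
begin

lemma c_lip_pt:
  fixes c :: "'a::real_normed_vector \<Rightarrow> 'b::real_normed_vector \<Rightarrow> real"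
  assumes "x0 \<in> X" "x1 \<in> X" "y \<in> Y" "x0 \<noteq> x1"
  shows "ereal (\<bar>c x1 y - c x0 y\<bar> / norm (x1 - x0)) \<le> c_lip c X Y"
proof -
  have "ereal (\<bar>c x1 y - c x0 y\<bar> / sqrt ((norm (x1 - x0))\<^sup>2 + (norm (y - y))\<^sup>2)) \<le> c_lip c X Y"
    unfolding c_lip_def
    by (rule SUP_upper2[where i="((x1, y), (x0, y))"]) (use assms in auto)
  then show ?thesis by simp
qed

lemma half:
  fixes c :: "'a::real_normed_vector \<Rightarrow> 'b::real_normed_vector \<Rightarrow> real"
  assumes phi: "alt_c_convex c X Y \<phi>" and Yne: "Y \<noteq> {}"
    and x: "x0 \<in> X" "x1 \<in> X" and L: "c_lip c X Y = ereal L"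
  shows "\<phi> x1 - \<phi> x0 \<le> L * norm (x1 - x0)"
proof -
  have bnd: "c x0 y - c x1 y \<le> L * norm (x1 - x0)" if y: "y \<in> Y" for y
  proof (cases "x0 = x1")
    case True then show ?thesis by simp
  next
    case False
    have "ereal (\<bar>c x1 y - c x0 y\<bar> / norm (x1 - x0)) \<le> ereal L"
      using c_lip_pt[OF x(1) x(2) y False, of c] L by simp
    then have "\<bar>c x1 y - c x0 y\<bar> / norm (x1 - x0) \<le> L" by simp
    moreover have "norm (x1 - x0) > 0" using False by simp
    ultimately have "\<bar>c x1 y - c x0 y\<bar> \<le> L * norm (x1 - x0)"
      by (simp add: divide_le_eq)
    then show ?thesis by linarith
  qed
  let ?S = "{- c x1 y + h | y h. y \<in> Y \<and> - c (fst (x0, \<phi> x0)) y + h \<le> snd (x0, \<phi> x0) \<and> - c (fst (x0, \<phi> x0)) y + h \<le> snd (x0, \<phi> x0)}"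
  have "\<phi> x1 \<le> c_chord c Y (x0, \<phi> x0) (x0, \<phi> x0) x1"
    using phi x unfolding alt_c_convex_def by blast
  also have "\<dots> = Sup ?S" unfolding c_chord_def by simp
  also have "\<dots> \<le> \<phi> x0 + L * norm (x1 - x0)"
  proof (rule cSup_least)
    obtain y where "y \<in> Y" using Yne by blast
    then have "- c x1 y + (\<phi> x0 + c x0 y) \<in> ?S" by force
    then show "?S \<noteq> {}" by blast
  next
    fix z assume "z \<in> ?S"
    then obtain y h where "z = - c x1 y + h" "y \<in> Y" "- c x0 y + h \<le> \<phi> x0" by auto
    then show "z \<le> \<phi> x0 + L * norm (x1 - x0)" using bnd[of y] by linarith
  qed
  finally show ?thesis by simp
qed

theorem lemma4p4:
  fixes X Y :: "(real^'n) set"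
    and c :: "real^'n \<Rightarrow> real^'n \<Rightarrow> real"
    and Dx Dy :: "real^'n \<Rightarrow> real^'n \<Rightarrow> real^'n"
    and Dxy Dyx :: "real^'n \<Rightarrow> real^'n \<Rightarrow> real^'n^'n"
    and \<phi> :: "real^'n \<Rightarrow> real"
  assumes X_cpt: "compact X" and Y_cpt: "compact Y"
    and X_int: "interior X \<noteq> {}" and Y_int: "interior Y \<noteq> {}"
    and c_cont: "continuous_on (X \<times> Y) (\<lambda>(x, y). c x y)"
    and Dx_deriv: "\<And>x y. x \<in> X \<Longrightarrow> y \<in> Y \<Longrightarrow>
                     ((\<lambda>x'. c x' y) has_derivative (\<lambda>h. Dx x y \<bullet> h)) (at x within X)"
    and Dy_deriv: "\<And>x y. x \<in> X \<Longrightarrow> y \<in> Y \<Longrightarrow>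
                     ((\<lambda>y'. c x y') has_derivative (\<lambda>k. Dy x y \<bullet> k)) (at y within Y)"
    and Dx_cont: "continuous_on (X \<times> Y) (\<lambda>(x, y). Dx x y)"
    and Dy_cont: "continuous_on (X \<times> Y) (\<lambda>(x, y). Dy x y)"
    and Dxy_deriv: "\<And>x y. x \<in> X \<Longrightarrow> y \<in> Y \<Longrightarrow>
                     ((\<lambda>y'. Dx x y') has_derivative (\<lambda>k. Dxy x y *v k)) (at y within Y)"
    and Dyx_deriv: "\<And>x y. x \<in> X \<Longrightarrow> y \<in> Y \<Longrightarrow>
                     ((\<lambda>x'. Dy x' y) has_derivative (\<lambda>h. Dyx x y *v h)) (at x within X)"
    and Dxy_cont: "continuous_on (X \<times> Y) (\<lambda>(x, y). Dxy x y)"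
    and Dyx_cont: "continuous_on (X \<times> Y) (\<lambda>(x, y). Dyx x y)"
    and Dxy_sym: "\<And>x y. x \<in> X \<Longrightarrow> y \<in> Y \<Longrightarrow> Dxy x y = transpose (Dyx x y)"
    and twist_x: "\<And>x. x \<in> X \<Longrightarrow> inj_on (\<lambda>y. - Dx x y) Y"
    and twist_y: "\<And>y. y \<in> Y \<Longrightarrow> inj_on (\<lambda>x. - Dy x y) X"
    and nondeg: "\<And>x y. x \<in> X \<Longrightarrow> y \<in> Y \<Longrightarrow> invertible (Dxy x y)"
    and conv_y: "\<And>y. y \<in> Y \<Longrightarrow> convex ((\<lambda>x. - Dy x y) ` X)"
    and conv_x: "\<And>x. x \<in> X \<Longrightarrow> convex ((\<lambda>y. - Dx x y) ` Y)"
    and phi: "alt_c_convex c X Y \<phi>"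
  shows "\<forall>x0\<in>X. \<forall>x1\<in>X. ereal \<bar>\<phi> x1 - \<phi> x0\<bar> \<le> c_lip c X Y * ereal (norm (x1 - x0))"
proof (intro ballI)
  fix x0 x1 assume x: "x0 \<in> X" "x1 \<in> X"
  have Yne: "Y \<noteq> {}" using Y_int interior_subset by blast
  show "ereal \<bar>\<phi> x1 - \<phi> x0\<bar> \<le> c_lip c X Y * ereal (norm (x1 - x0))"
  proof (cases "x0 = x1")
    case True then show ?thesis by (simp add: zero_ereal_def[symmetric])
  next
    case False
    obtain y where y: "y \<in> Y" using Yne by blast
    have ge: "ereal (\<bar>c x1 y - c x0 y\<bar> / norm (x1 - x0)) \<le> c_lip c X Y"
      using c_lip_pt[OF x(1) x(2) y False] .
    have np: "norm (x1 - x0) > 0" using False by simp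
    show ?thesis
    proof (cases "c_lip c X Y")
      case (real L)
      have "\<phi> x1 - \<phi> x0 \<le> L * norm (x1 - x0)" using half[OF phi Yne x real] .
      moreover have "\<phi> x0 - \<phi> x1 \<le> L * norm (x0 - x1)" using half[OF phi Yne x(2) x(1) real] .
      ultimately have "\<bar>\<phi> x1 - \<phi> x0\<bar> \<le> L * norm (x1 - x0)" by (simp add: norm_minus_commute)
      then show ?thesis using real by simp
    next
      case PInf then show ?thesis using np by simp
    next
      case MInf then show ?thesis using ge by simp
    qed
  qed
qed

end
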